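(* Let $d,m,n$ be positive integers with $m\ge 2$ and $n\geq d+1$, let $\mu$ be an arbitrary probability distribution on $\mathbb{R}^d$, and let $Z_1,\ldots,Z_n$ be i.i.d. with distribution $\mu$, $\boldsymbol{Z}=(Z_1,\dots,Z_n)$. Then for every $\delta\in(0,1)$, with probability at least $1-\delta$ (over $\boldsymbol{Z}$), simultaneously for all codebooks $C=(x_1,\ldots,x_m)\in(\mathbb{R}^d)^m$ and all positive-definite matrices $S\in\mathbb{S}_+^d$, \[ \left|P_e^{\mu}(C,S)-P_e^{\boldsymbol{Z}}(C,S)\right|\leq 4m\sqrt{\frac{2(d+1)\log\left(\frac{en}{d+1}\right)}{n}}+\sqrt{\frac{2\log(2/\delta)}{n}}. \]
   Context: For a positive-definite $d\times d$ matrix $S$ (the set of these is $\mathbb{S}_+^d$) and $v\in\mathbb{R}^d$, write $\|v\|_S^2=v^TSv$. For a codebook $C=(x_1,\ldots,x_m)$, $S\in\mathbb{S}_+^d$, $j\in[m]=\{1,\dots,m\}$ and $z\in\mathbb{R}^d$ define the loss \[\ell_j(C,S,z)=\mathbb{I}\Big[\min_{j'\in[m],\,j'\neq j}\big(\|x_j-x_{j'}\|_S^2+2(x_j-x_{j'})^TSz\big)<0\Big],\qquad \ell(C,S,z)=\frac1m\sum_{j=1}^m\ell_j(C,S,z),\] which is the error indicator of the minimum Mahalanobis-distance decoder $\hat j(y)\in\arg\min_j\|x_j-y\|_S$ over the additive noise channel $Y=x_j+z$ when codeword $j$ (chosen uniformly) is sent. The expected average error probability is $P_e^{\mu}(C,S)=\mathbb{E}_{Z\sim\mu}[\ell(C,S,Z)]$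 and the empirical average error probability is $P_e^{\boldsymbol{Z}}(C,S)=\frac1n\sum_{i=1}^n\ell(C,S,Z_i)$. *)

theory Defs
  imports "HOL-Probability.Probability"
begin

definition pos_def :: "real^'d^'d \<Rightarrow> bool" where
  "pos_def S \<longleftrightarrow> transpose S = S \<and> (\<forall>v. v \<noteq> 0 \<longrightarrow> v \<bullet> (S *v v) > 0)"

definition sqnormS :: "real^'d^'d \<Rightarrow> real^'d \<Rightarrow> real" where
  "sqnormS S v = v \<bullet> (S *v v)"

text \<open>Codebook C = (x_1,...,x_m) represented as x :: nat => real^d with codewords x 0, ..., x (m-1).\<close>
definition loss_j :: "nat \<Rightarrow> (nat \<Rightarrow> real^'d) \<Rightarrow> real^'d^'d \<Rightarrow> nat \<Rightarrow> real^'d \<Rightarrow> real" where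
  "loss_j m x S j z =
     (if Min ((\<lambda>j'. sqnormS S (x j - x j') + 2 * ((x j - x j') \<bullet> (S *v z)))
              ` {j'. j' < m \<and> j' \<noteq> j}) < 0 then 1 else 0)"

definition loss :: "nat \<Rightarrow> (nat \<Rightarrow> real^'d) \<Rightarrow> real^'d^'d \<Rightarrow> real^'d \<Rightarrow> real" where
  "loss m x S z = (1 / real m) * (\<Sum>j<m. loss_j m x S j z)"

definition Pe_mu :: "(real^'d) measure \<Rightarrow> nat \<Rightarrow> (nat \<Rightarrow> real^'d) \<Rightarrow> real^'d^'d \<Rightarrow> real" where
  "Pe_mu \<mu> m x S = (\<integral>z. loss m x S z \<partial>\<mu>)"

definition Pe_emp :: "nat \<Rightarrow> (nat \<Rightarrow> real^'d) \<Rightarrow> nat \<Rightarrow> (nat \<Rightarrow> real^'d) \<Rightarrow> real^'d^'d \<Rightarrow> real" where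
  "Pe_emp n Z m x S = (1 / real n) * (\<Sum>i<n. loss m x S (Z i))"

end

theory Submission
  imports Defs "HOL-Probability.Hoeffding"
begin

definition shatters :: "'a set set \<Rightarrow> 'a set \<Rightarrow> bool" where
  "shatters F S \<longleftrightarrow> (\<forall>T\<subseteq>S. \<exists>A\<in>F. A \<inter> S = T)"

lemma pajor:
  assumes "finite X" "F \<subseteq> Pow X"
  shows "card F \<le> card {S. S \<subseteq> X \<and> shatters F S}"
  using assms
proof (induction X arbitrary: F rule: finite_induct)
  case empty
  show ?case
  proof (cases "F = {}")
    case True thus ?thesis by simp
  next
    case False
    with empty have F: "F = {{}}" by auto
    have "{S. S \<subseteq> {} \<and> shatters F S} = {{}}"
      by (auto simp: shatters_def F)
    thus ?thesis using F by simp
  qed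
next
  case (insert x X)
  define F0 where "F0 = (\<lambda>A. A - {x}) ` F"
  define F1 where "F1 = {A \<in> Pow X. A \<in> F \<and> insert x A \<in> F}"
  define Fa where "Fa = {A \<in> F. x \<notin> A \<or> A - {x} \<notin> F}"
  define Fb where "Fb = {A \<in> F. x \<in> A \<and> A - {x} \<in> F}"
  have finF: "finite F" using insert.prems insert.hyps(1)
    by (meson finite_Pow_iff finite_insert rev_finite_subset)
  have F0: "F0 \<subseteq> Pow X" using insert.prems by (auto simp: F0_def)
  have F1: "F1 \<subseteq> Pow X" by (auto simp: F1_def)
  have "card F \<le> card Fa + card Fb"
  proof -
    have "F = Fa \<union> Fb" by (auto simp: Fa_def Fb_def)
    thus ?thesis by (metis card_Un_le)
  qed
  also have "card Fa \<le> card F0"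
  proof -
    have "inj_on (\<lambda>A. A - {x}) Fa"
    proof (rule inj_onI)
      fix A B assume A: "A \<in> Fa" and B: "B \<in> Fa" and eq: "A - {x} = B - {x}"
      show "A = B"
      proof (cases "x \<in> A \<longleftrightarrow> x \<in> B")
        case True thus ?thesis using eq by blast
      next
        case False
        show ?thesis
        proof (cases "x \<in> A")
          case True
          hence "x \<notin> B" using False by blast
          hence "A - {x} = B" using eq by simp
          hence "A - {x} \<in> F" using B by (simp add: Fa_def)
          thus ?thesis using A True by (simp add: Fa_def)
        next
          case xA: False
          hence "x \<in> B" using False by blast
          have "B - {x} = A" using eq xA by simp
          hence "B - {x} \<in> F" using A by (simp add: Fa_def)
          thus ?thesis using B \<open>x \<in> B\<close> by (simp add: Fa_def)
        qed
      qed
    qed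
    moreover have "(\<lambda>A. A - {x}) ` Fa \<subseteq> F0" by (auto simp: F0_def Fa_def)
    moreover have "finite F0" using finF by (simp add: F0_def)
    ultimately show ?thesis by (metis card_image card_mono)
  qed
  also have "card Fb \<le> card F1"
  proof -
    have "inj_on (\<lambda>A. A - {x}) Fb" by (rule inj_onI) (auto simp: Fb_def)
    moreover have "(\<lambda>A. A - {x}) ` Fb \<subseteq> F1"
      using insert.prems by (auto simp: F1_def Fb_def insert_absorb)
    moreover have "finite F1" using insert.hyps(1) by (simp add: F1_def)
    ultimately show ?thesis by (metis card_image card_mono)
  qed
  also have "card F0 \<le> card {S. S \<subseteq> X \<and> shatters F0 S}" by (rule insert.IH[OF F0])
  also have "card F1 \<le> card {S. S \<subseteq> X \<and> shatters F1 S}" by (rule insert.IH[OF F1])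
  finally have le: "card F \<le> card {S. S \<subseteq> X \<and> shatters F0 S} + card {S. S \<subseteq> X \<and> shatters F1 S}"
    by simp
  define Sh0 where "Sh0 = {S. S \<subseteq> X \<and> shatters F0 S}"
  define Sh1 where "Sh1 = {S. S \<subseteq> X \<and> shatters F1 S}"
  have fin0: "finite Sh0" using insert.hyps(1) by (simp add: Sh0_def)
  have fin1: "finite Sh1" using insert.hyps(1) by (simp add: Sh1_def)
  have inj1: "inj_on (insert x) Sh1"
  proof (rule inj_onI)
    fix A B assume "A \<in> Sh1" "B \<in> Sh1" "insert x A = insert x B"
    moreover have "x \<notin> A" "x \<notin> B" using calculation insert.hyps(2) by (auto simp: Sh1_def)
    ultimately show "A = B" by (metis Diff_insert_absorb)
  qed
  have disj: "Sh0 \<inter> insert x ` Sh1 = {}"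
    using insert.hyps(2) by (auto simp: Sh0_def)
  have sub0: "S \<subseteq> insert x X \<and> shatters F S" if "S \<in> Sh0" for S
  proof -
    have S: "S \<subseteq> X" "shatters F0 S" using that by (auto simp: Sh0_def)
    have "shatters F S" unfolding shatters_def
    proof (intro allI impI)
      fix T assume "T \<subseteq> S"
      then obtain A0 where "A0 \<in> F0" "A0 \<inter> S = T" using S unfolding shatters_def by blast
      then obtain A where "A \<in> F" "(A - {x}) \<inter> S = T" by (auto simp: F0_def)
      moreover have "x \<notin> S" using S insert.hyps(2) by auto
      ultimately show "\<exists>A\<in>F. A \<inter> S = T" by (intro bexI[of _ A]) auto
    qed
    thus ?thesis using S by auto
  qed
  have sub1: "insert x S \<subseteq> insert x X \<and> shatters F (insert x S)" if "S \<in> Sh1" for S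
  proof -
    have S: "S \<subseteq> X" "shatters F1 S" using that by (auto simp: Sh1_def)
    have "shatters F (insert x S)" unfolding shatters_def
    proof (intro allI impI)
      fix T assume T: "T \<subseteq> insert x S"
      hence "T - {x} \<subseteq> S" by blast
      then obtain A where A: "A \<in> F1" "A \<inter> S = T - {x}" using S unfolding shatters_def by blast
      have xA: "x \<notin> A" using A(1) insert.hyps(2) by (auto simp: F1_def)
      show "\<exists>A\<in>F. A \<inter> insert x S = T"
      proof (cases "x \<in> T")
        case True
        thus ?thesis using A xA T by (intro bexI[of _ "insert x A"]) (auto simp: F1_def)
      next
        case False
        thus ?thesis using A xA T by (intro bexI[of _ A]) (auto simp: F1_def)
      qed
    qed
    thus ?thesis using S by auto
  qed
  have sub: "Sh0 \<union> insert x ` Sh1 \<subseteq> {S. S \<subseteq> insert x X \<and> shatters F S}"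
    using sub0 sub1 by blast
  have "card Sh0 + card Sh1 = card (Sh0 \<union> insert x ` Sh1)"
    using fin0 fin1 disj inj1 by (simp add: card_Un_disjoint card_image)
  also have "\<dots> \<le> card {S. S \<subseteq> insert x X \<and> shatters F S}"
    by (rule card_mono[OF _ sub]) (use insert.hyps(1) in simp)
  finally show ?case using le by (simp add: Sh0_def Sh1_def)
qed

definition halfsp :: "(nat \<Rightarrow> real^'d) \<Rightarrow> nat \<Rightarrow> nat set set" where
  "halfsp y N = {{i. i < N \<and> c + w \<bullet> y i < 0} | c w. True}"

lemma halfsp_shatters_card:
  fixes y :: "nat \<Rightarrow> real^'d"
  assumes sh: "shatters (halfsp y N) S" and SN: "S \<subseteq> {..<N}"
  shows "card S \<le> CARD('d) + 1"
proof (rule ccontr)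
  assume "\<not> ?thesis"
  hence big: "card S \<ge> CARD('d) + 2" by simp
  have finS: "finite S" using SN finite_subset by blast
  have get: "\<exists>c w. \<forall>i\<in>S. (i \<in> T) = (c + w \<bullet> y i < 0)" if "T \<subseteq> S" for T
  proof -
    from sh that obtain A where A: "A \<in> halfsp y N" "A \<inter> S = T" unfolding shatters_def by blast
    from A(1) obtain c w where eq: "A = {i. i < N \<and> c + w \<bullet> y i < 0}" unfolding halfsp_def by blast
    have "\<forall>i\<in>S. (i \<in> T) = (c + w \<bullet> y i < 0)"
    proof
      fix i assume i: "i \<in> S"
      hence "i < N" using SN by auto
      thus "(i \<in> T) = (c + w \<bullet> y i < 0)" using A(2) eq i by blast
    qed
    thus ?thesis by blast
  qed
  show False
  proof (cases "inj_on y S")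
    case False
    then obtain i j where ij: "i \<in> S" "j \<in> S" "i \<noteq> j" "y i = y j" by (auto simp: inj_on_def)
    obtain c w where "\<forall>k\<in>S. (k \<in> {i}) = (c + w \<bullet> y k < 0)" using get[of "{i}"] ij by auto
    thus False using ij by (metis singletonD singletonI)
  next
    case True
    define Y where "Y = y ` S"
    have finY: "finite Y" using finS by (simp add: Y_def)
    have "card Y = card S" using True by (simp add: Y_def card_image)
    hence "card Y \<ge> DIM(real^'d) + 2" using big by simp
    hence "affine_dependent Y" using affine_dependent_biggerset finY by blast
    then obtain U where U: "sum U Y = 0" "\<exists>v\<in>Y. U v \<noteq> 0" "(\<Sum>v\<in>Y. U v *\<^sub>R v) = 0"
      using affine_dependent_explicit_finite[OF finY] by blast
    obtain c w where cw: "\<forall>i\<in>S. (i \<in> {i \<in> S. U (y i) > 0}) = (c + w \<bullet> y i < 0)"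
      using get[of "{i \<in> S. U (y i) > 0}"] by blast
    have cw': "\<forall>v\<in>Y. (U v > 0) = (c + w \<bullet> v < 0)" using cw by (auto simp: Y_def)
    have "(\<Sum>v\<in>Y. U v * (c + w \<bullet> v)) = c * sum U Y + w \<bullet> (\<Sum>v\<in>Y. U v *\<^sub>R v)"
      by (simp add: algebra_simps sum.distrib sum_distrib_left inner_sum_right)
    also have "\<dots> = 0" using U by simp
    finally have sum0: "(\<Sum>v\<in>Y. U v * (c + w \<bullet> v)) = 0" .
    have nonpos: "\<forall>v\<in>Y. U v * (c + w \<bullet> v) \<le> 0"
    proof
      fix v assume v: "v \<in> Y"
      show "U v * (c + w \<bullet> v) \<le> 0"
      proof (cases "U v > 0")
        case True thus ?thesis using cw' v by (simp add: mult_pos_neg less_imp_le)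
      next
        case False
        hence "U v \<le> 0" by simp
        moreover have "c + w \<bullet> v \<ge> 0" using cw' v False by auto
        ultimately show ?thesis by (simp add: mult_nonpos_nonneg)
      qed
    qed
    have "(\<Sum>v\<in>Y. - (U v * (c + w \<bullet> v))) = 0" using sum0 by (simp add: sum_negf)
    hence "\<forall>v\<in>Y. - (U v * (c + w \<bullet> v)) = 0"
      using sum_nonneg_eq_0_iff[OF finY, of "\<lambda>v. - (U v * (c + w \<bullet> v))"] nonpos by auto
    hence "\<forall>v\<in>Y. U v * (c + w \<bullet> v) = 0" by simp
    hence nopos: "\<forall>v\<in>Y. \<not> U v > 0" using cw' by (metis mult_pos_neg less_irrefl)
    have "(\<Sum>v\<in>Y. - U v) = 0" using U(1) by (simp add: sum_negf)
    hence "\<forall>v\<in>Y. - U v = 0"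
      using sum_nonneg_eq_0_iff[OF finY, of "\<lambda>v. - U v"] nopos by force
    hence "\<forall>v\<in>Y. U v = 0" by simp
    thus False using U(2) by blast
  qed
qed

lemma card_small_subsets:
  assumes "finite A"
  shows "card {S. S \<subseteq> A \<and> card S \<le> K} = (\<Sum>k\<le>K. card A choose k)"
proof -
  have "{S. S \<subseteq> A \<and> card S \<le> K} = (\<Union>k\<in>{..K}. {S. S \<subseteq> A \<and> card S = k})" by auto
  hence "card {S. S \<subseteq> A \<and> card S \<le> K} = (\<Sum>k\<le>K. card {S. S \<subseteq> A \<and> card S = k})"
    using assms by (simp only:) (subst card_UN_disjoint, auto)
  thus ?thesis using assms by (simp add: n_subsets)
qed

lemma sum_binom_le:
  assumes "1 \<le> K" "K \<le> N"
  shows "real (\<Sum>k\<le>K. N choose k) \<le> (exp 1 * real N / real K) ^ K"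
proof -
  define r where "r = real K / real N"
  have r: "0 < r" "r \<le> 1" using assms by (auto simp: r_def)
  have "real (\<Sum>k\<le>K. N choose k) * r^K = (\<Sum>k\<le>K. real (N choose k) * r^K)"
    by (simp add: sum_distrib_right)
  also have "\<dots> \<le> (\<Sum>k\<le>K. real (N choose k) * r^k)"
    by (intro sum_mono mult_left_mono power_decreasing) (use r in auto)
  also have "\<dots> \<le> (\<Sum>k\<le>N. real (N choose k) * r^k)"
    by (intro sum_mono2) (use assms r in auto)
  also have "\<dots> = (r + 1)^N" by (simp add: binomial_ring)
  also have "\<dots> \<le> exp r ^ N"
    by (intro power_mono) (use r in \<open>auto simp: add.commute intro: exp_ge_add_one_self[of r, simplified add.commute]\<close>)
  also have "\<dots> = exp 1 ^ K"
    using assms by (simp add: r_def flip: exp_of_nat_mult)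
  finally have "real (\<Sum>k\<le>K. N choose k) * r^K \<le> exp 1 ^ K" .
  hence "real (\<Sum>k\<le>K. N choose k) \<le> exp 1 ^ K / r^K"
    using r by (simp add: field_simps)
  also have "\<dots> = (exp 1 * real N / real K) ^ K"
    using assms by (simp add: r_def power_divide field_simps)
  finally show ?thesis .
qed

lemma card_halfsp:
  fixes y :: "nat \<Rightarrow> real^'d"
  assumes "CARD('d) + 1 \<le> N"
  shows "finite (halfsp y N)"
    and "real (card (halfsp y N)) \<le> (exp 1 * real N / real (CARD('d) + 1)) ^ (CARD('d) + 1)"
proof -
  have sub: "halfsp y N \<subseteq> Pow {..<N}" by (auto simp: halfsp_def)
  thus "finite (halfsp y N)" by (rule finite_subset) simp
  have "card (halfsp y N) \<le> card {S. S \<subseteq> {..<N} \<and> shatters (halfsp y N) S}"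
    by (rule pajor[OF _ sub]) simp
  also have "\<dots> \<le> card {S. S \<subseteq> {..<N} \<and> card S \<le> CARD('d) + 1}"
    using halfsp_shatters_card[of y N] by (intro card_mono) auto
  also have "\<dots> = (\<Sum>k\<le>CARD('d) + 1. N choose k)" by (simp add: card_small_subsets)
  finally have "real (card (halfsp y N)) \<le> real (\<Sum>k\<le>CARD('d) + 1. N choose k)" by linarith
  also have "\<dots> \<le> (exp 1 * real N / real (CARD('d) + 1)) ^ (CARD('d) + 1)"
    by (rule sum_binom_le) (use assms in auto)
  finally show "real (card (halfsp y N)) \<le> (exp 1 * real N / real (CARD('d) + 1)) ^ (CARD('d) + 1)" .
qed

lemma cosh_bound:
  fixes x :: real
  shows "exp (-x) + exp x \<le> 2 * exp (x^2 / 2)"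
proof -
  define y where "y = \<bar>x\<bar>"
  have y: "y \<ge> 0" by (simp add: y_def)
  have sym: "exp (-x) + exp x = exp (-y) + exp y"
    by (cases "x \<ge> 0") (auto simp: y_def)
  have x2: "x^2 = y^2" by (simp add: y_def)
  have "-(2*y) * (1/2) + ln (1 + (1/2) * (exp (2*y) - 1)) \<le> (2*y)^2 / 8"
    using Hoeffdings_lemma_aux[of "2*y" "1/2"] y by simp
  hence "ln ((1 + exp (2*y)) / 2) \<le> y + y^2/2"
    by (simp add: power2_eq_square field_simps)
  hence "(1 + exp (2*y)) / 2 \<le> exp (y + y^2/2)"
  proof -
    assume h: "ln ((1 + exp (2*y)) / 2) \<le> y + y^2/2"
    have pos: "(1 + exp (2*y)) / 2 > 0" by (simp add: add_pos_pos)
    have "exp (ln ((1 + exp (2*y)) / 2)) \<le> exp (y + y^2/2)" using h by (simp only: exp_le_cancel_iff)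
    thus ?thesis using pos by (simp only: exp_ln)
  qed
  hence "exp (-y) * ((1 + exp (2*y)) / 2) \<le> exp (-y) * exp (y + y^2/2)"
    by (intro mult_left_mono) auto
  moreover have "exp (-y) * ((1 + exp (2*y)) / 2) = (exp (-y) + exp y) / 2"
    by (simp add: field_simps flip: exp_add)
  moreover have "exp (-y) * exp (y + y^2/2) = exp (y^2/2)"
    by (simp flip: exp_add)
  ultimately show ?thesis using sym x2 by simp
qed

lemma rademacher_count:
  fixes a :: "nat \<Rightarrow> real" and n :: nat and t :: real
  assumes a: "\<And>i. i < n \<Longrightarrow> \<bar>a i\<bar> \<le> 1" and t: "t \<ge> 0"
  shows "real (card {\<sigma> \<in> Pi\<^sub>E {..<n} (\<lambda>_. UNIV::bool set).
             (\<Sum>i<n. if \<sigma> i then - a i else a i) \<ge> real n * t})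
         \<le> 2^n * exp (- real n * t^2 / 2)"
proof -
  define s where "s = (\<lambda>\<sigma>::nat\<Rightarrow>bool. (\<Sum>i<n. if \<sigma> i then - a i else a i))"
  define P where "P = Pi\<^sub>E {..<n} (\<lambda>_. UNIV::bool set)"
  define B where "B = {\<sigma> \<in> P. s \<sigma> \<ge> real n * t}"
  have finP: "finite P" unfolding P_def by (intro finite_PiE) auto
  have "real (card B) * exp (real n * t^2) = (\<Sum>\<sigma>\<in>B. exp (t * (real n * t)))"
    by (simp add: power2_eq_square mult_ac)
  also have "\<dots> \<le> (\<Sum>\<sigma>\<in>B. exp (t * s \<sigma>))"
    by (intro sum_mono) (use t in \<open>auto simp: B_def intro: mult_left_mono\<close>)
  also have "\<dots> \<le> (\<Sum>\<sigma>\<in>P. exp (t * s \<sigma>))"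
    by (intro sum_mono2 finP) (auto simp: B_def)
  also have "\<dots> = (\<Sum>\<sigma>\<in>P. \<Prod>i<n. exp (t * (if \<sigma> i then - a i else a i)))"
    by (simp add: s_def sum_distrib_left exp_sum)
  also have "\<dots> = (\<Prod>i<n. \<Sum>b\<in>(UNIV::bool set). exp (t * (if b then - a i else a i)))"
    unfolding P_def by (subst prod_sum_PiE) auto
  also have "\<dots> = (\<Prod>i<n. exp (- (t * a i)) + exp (t * a i))"
    by (simp add: UNIV_bool add.commute)
  also have "\<dots> \<le> (\<Prod>i<n. 2 * exp (t^2 / 2))"
  proof (intro prod_mono conjI)
    fix i assume i: "i \<in> {..<n}"
    show "0 \<le> exp (- (t * a i)) + exp (t * a i)" by (intro add_nonneg_nonneg) auto
    have "(t * a i)^2 \<le> t^2"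
    proof -
      have "(a i)^2 \<le> 1" using a[of i] i by (simp add: abs_square_le_1)
      hence "t^2 * (a i)^2 \<le> t^2" by (simp add: mult_left_le)
      thus ?thesis by (simp add: power_mult_distrib)
    qed
    hence "exp ((t * a i)^2/2) \<le> exp (t^2/2)" by simp
    thus "exp (- (t * a i)) + exp (t * a i) \<le> 2 * exp (t^2 / 2)"
      using cosh_bound[of "t * a i"] by linarith
  qed
  also have "\<dots> = 2^n * exp (real n * t^2 / 2)"
    by (simp add: power_mult_distrib exp_of_nat_mult[symmetric] flip: exp_sum)
  finally have "real (card B) * exp (real n * t^2) \<le> 2^n * exp (real n * t^2 / 2)" .
  hence "real (card B) \<le> 2^n * exp (real n * t^2 / 2) / exp (real n * t^2)"
    by (simp add: field_simps)
  also have "\<dots> = 2^n * exp (- real n * t^2 / 2)"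
    by (simp add: exp_diff[symmetric] field_simps flip: exp_add)
  finally show ?thesis by (simp add: B_def P_def s_def)
qed

definition gfun :: "nat \<Rightarrow> (nat \<times> nat \<Rightarrow> real \<times> (real^'d)) \<Rightarrow> real^'d \<Rightarrow> real" where
  "gfun m p z = (1 / real m) * (\<Sum>j<m. if (\<exists>j'<m. j' \<noteq> j \<and> fst (p (j,j')) + snd (p (j,j')) \<bullet> z < 0) then 1 else 0)"

definition paramf :: "(nat \<Rightarrow> real^'d) \<Rightarrow> real^'d^'d \<Rightarrow> nat \<times> nat \<Rightarrow> real \<times> (real^'d)" where
  "paramf x S = (\<lambda>(j,j'). (sqnormS S (x j - x j'), 2 *\<^sub>R ((x j - x j') v* S)))"

lemma loss_eq_gfun:
  assumes "m \<ge> 2"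
  shows "loss m x S z = gfun m (paramf x S) z"
proof -
  have "loss_j m x S j z = (if (\<exists>j'<m. j' \<noteq> j \<and> fst (paramf x S (j,j')) + snd (paramf x S (j,j')) \<bullet> z < 0) then 1 else 0)"
    if j: "j < m" for j
  proof -
    define A where "A = {j'. j' < m \<and> j' \<noteq> j}"
    have finA: "finite A" by (simp add: A_def)
    have neA: "A \<noteq> {}"
    proof (cases "j = 0")
      case True thus ?thesis using assms by (auto simp: A_def intro!: exI[of _ 1])
    next
      case False thus ?thesis using j by (auto simp: A_def intro!: exI[of _ 0])
    qed
    have eq: "sqnormS S (x j - x j') + 2 * ((x j - x j') \<bullet> (S *v z))
            = fst (paramf x S (j,j')) + snd (paramf x S (j,j')) \<bullet> z" for j'
      by (simp add: paramf_def dot_lmul_matrix)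
    have "(Min ((\<lambda>j'. sqnormS S (x j - x j') + 2 * ((x j - x j') \<bullet> (S *v z))) ` A) < 0)
          = (\<exists>j'\<in>A. sqnormS S (x j - x j') + 2 * ((x j - x j') \<bullet> (S *v z)) < 0)"
      using finA neA by (subst Min_less_iff) auto
    thus ?thesis unfolding loss_j_def A_def[symmetric] eq by (auto simp: A_def)
  qed
  thus ?thesis unfolding loss_def gfun_def by (intro arg_cong[where f="\<lambda>s. (1 / real m) * s"] sum.cong) auto
qed

lemma halfspace_approx:
  fixes D :: "(real \<times> (real^'d)) set" and Y :: "(real^'d) set"
  assumes D: "\<And>X. open X \<Longrightarrow> X \<noteq> {} \<Longrightarrow> \<exists>d\<in>D. d \<in> X"
    and Y: "finite Y"
  shows "\<exists>q\<in>D. \<forall>y\<in>Y. (fst q + snd q \<bullet> y < 0) = (c + w \<bullet> y < 0)"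
proof -
  define neg where "neg = {y\<in>Y. c + w \<bullet> y < 0}"
  have finneg: "finite neg" using Y by (simp add: neg_def)
  obtain \<gamma> where \<gamma>: "\<gamma> > 0" "\<forall>y\<in>neg. c + w \<bullet> y + \<gamma> < 0"
  proof (cases "neg = {}")
    case True thus ?thesis using that[of 1] by auto
  next
    case False
    define \<gamma> where "\<gamma> = Min ((\<lambda>y. - (c + w \<bullet> y)) ` neg) / 2"
    have "\<gamma> > 0" using False finneg by (simp add: \<gamma>_def neg_def)
    moreover have "\<forall>y\<in>neg. c + w \<bullet> y + \<gamma> < 0"
    proof
      fix y assume y: "y \<in> neg"
      have "Min ((\<lambda>y. - (c + w \<bullet> y)) ` neg) \<le> - (c + w \<bullet> y)"
        using y finneg by (intro Min_le) auto
      moreover have "c + w \<bullet> y < 0" using y by (simp add: neg_def)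
      ultimately show "c + w \<bullet> y + \<gamma> < 0" unfolding \<gamma>_def by linarith
    qed
    ultimately show ?thesis using that by blast
  qed
  define Opn where "Opn = (\<Inter>y\<in>Y. {q :: real \<times> (real^'d). if y \<in> neg then fst q + snd q \<bullet> y < 0 else 0 < fst q + snd q \<bullet> y})"
  have "open Opn" unfolding Opn_def
  proof (intro open_INT ballI Y)
    fix y
    show "open {q :: real \<times> (real^'d). if y \<in> neg then fst q + snd q \<bullet> y < 0 else 0 < fst q + snd q \<bullet> y}"
    proof (cases "y \<in> neg")
      case True
      thus ?thesis by (simp, intro open_Collect_less continuous_intros)
    next
      case False
      thus ?thesis by (simp, intro open_Collect_less continuous_intros)
    qed
  qed
  moreover have "(c + \<gamma>, w) \<in> Opn"
    using \<gamma> by (auto simp: Opn_def neg_def)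
  ultimately obtain q where q: "q \<in> D" "q \<in> Opn" using D by blast
  show ?thesis
  proof (intro bexI[OF _ q(1)] ballI)
    fix y assume y: "y \<in> Y"
    show "(fst q + snd q \<bullet> y < 0) = (c + w \<bullet> y < 0)"
      using q(2) y by (cases "y \<in> neg") (auto simp: Opn_def neg_def)
  qed
qed

lemma gfun_approx:
  fixes D :: "(real \<times> (real^'d)) set" and Y :: "(real^'d) set"
    and p :: "nat \<times> nat \<Rightarrow> real \<times> (real^'d)"
  assumes D: "\<And>X. open X \<Longrightarrow> X \<noteq> {} \<Longrightarrow> \<exists>d\<in>D. d \<in> X"
    and Y: "finite Y"
  shows "\<exists>p'\<in>Pi\<^sub>E ({..<m} \<times> {..<m}) (\<lambda>_. D). \<forall>y\<in>Y. gfun m p' y = gfun m p y"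
proof -
  have "\<forall>k\<in>{..<m} \<times> {..<m}. \<exists>q\<in>D. \<forall>y\<in>Y. (fst q + snd q \<bullet> y < 0) = (fst (p k) + snd (p k) \<bullet> y < 0)"
    using halfspace_approx[OF D Y] by blast
  then obtain p' where p': "p' \<in> Pi\<^sub>E ({..<m} \<times> {..<m}) (\<lambda>_. D)"
    "\<forall>k\<in>{..<m} \<times> {..<m}. \<forall>y\<in>Y. (fst (p' k) + snd (p' k) \<bullet> y < 0) = (fst (p k) + snd (p k) \<bullet> y < 0)"
    unfolding PiE_choice by blast
  have "gfun m p' y = gfun m p y" if "y \<in> Y" for y
    unfolding gfun_def
  proof (intro arg_cong[where f="\<lambda>s. (1 / real m) * s"] sum.cong refl)
    fix j assume "j \<in> {..<m}"
    thus "(if \<exists>j'<m. j' \<noteq> j \<and> fst (p' (j, j')) + snd (p' (j, j')) \<bullet> y < 0 then 1 else 0)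
        = (if \<exists>j'<m. j' \<noteq> j \<and> fst (p (j, j')) + snd (p (j, j')) \<bullet> y < 0 then 1 else (0::real))"
      using p'(2) that by auto
  qed
  thus ?thesis using p' by blast
qed

lemma arith_main:
  fixes K n m \<delta> :: real
  assumes K: "K \<ge> 2" and nK: "n \<ge> K" and m: "m \<ge> 2" and \<delta>: "0 < \<delta>" "\<delta> < 1"
  defines "\<epsilon> \<equiv> 4 * m * sqrt (2 * K * ln (exp 1 * n / K) / n) + sqrt (2 * ln (2 / \<delta>) / n)"
  defines "t \<equiv> \<epsilon> - 1 / sqrt n"
  shows "t \<ge> 0" and "4 * (exp 1 * (2 * n) / K) powr (K * m * m) * exp (- n * t^2 / 2) \<le> \<delta>"
proof -
  define L where "L = ln (exp 1 * n / K)"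
  have npos: "n > 0" using K nK by linarith
  have Kpos: "K > 0" using K by linarith
  have nK1: "n / K \<ge> 1" using nK Kpos by (simp add: field_simps)
  have L: "L = 1 + ln (n / K)"
  proof -
    have "ln (exp 1 * (n / K)) = ln (exp 1) + ln (n / K)" by (subst ln_mult) (use npos Kpos in auto)
    thus ?thesis by (simp add: L_def)
  qed
  have L1: "L \<ge> 1" using L nK1 by simp
  define s where "s = sqrt n"
  have s: "s > 0" "s^2 = n" using npos by (auto simp: s_def)
  define a where "a = 4 * m * sqrt (2 * K * L)"
  define b where "b = sqrt (2 * ln (2 / \<delta>))"
  have ln2d: "ln (2 / \<delta>) > 0" using \<delta> by simp
  have b0: "b \<ge> 0" unfolding b_def using ln2d by (intro real_sqrt_ge_zero) linarith
  have b2: "b^2 = 2 * ln (2 / \<delta>)" unfolding b_def using ln2d by (intro real_sqrt_pow2) linarith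
  have KL: "K * L \<ge> 2" using K L1 by (metis mult_mono mult.right_neutral order_trans zero_le_numeral one_le_numeral dual_order.refl le_numeral_extra(1) K)
  have a2: "a^2 = 32 * m^2 * (K * L)"
    using KL by (simp add: a_def power_mult_distrib)
  have sq4: "sqrt (2 * K * L) \<ge> 2"
  proof -
    have "2 * K * L \<ge> 4" using KL by linarith
    hence "sqrt (2 * K * L) \<ge> sqrt 4" by (rule real_sqrt_le_mono)
    thus ?thesis by simp
  qed
  have a16: "a \<ge> 16"
  proof -
    have "4 * m \<ge> 8" using m by linarith
    hence "4 * m * sqrt (2 * K * L) \<ge> 8 * 2" using sq4 by (intro mult_mono) auto
    thus ?thesis by (simp add: a_def)
  qed
  have eps: "\<epsilon> = a / s + b / s"
    by (simp add: \<epsilon>_def a_def b_def s_def L_def real_sqrt_divide real_sqrt_mult)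
  have teq: "t = (a + b - 1) / s"
    by (simp add: t_def eps s_def add_divide_distrib diff_divide_distrib)
  show "t \<ge> 0" unfolding teq using a16 b0 s by (intro divide_nonneg_pos) auto
  have nt2: "n * t^2 = (a + b - 1)^2"
    unfolding teq using s npos by (simp add: power_divide)
  have "(a + b - 1)^2 \<ge> a^2 / 2 + b^2"
  proof -
    have "(a + b - 1)^2 = (a - 1)^2 + 2 * (a - 1) * b + b^2" by (simp add: power2_eq_square algebra_simps)
    moreover have "2 * (a - 1) * b \<ge> 0" using a16 b0 by simp
    moreover have "(a - 1)^2 \<ge> a^2 / 2"
    proof -
      have "(a - 1)^2 - a^2/2 = (a - 2)^2 / 2 - 1" by (simp add: power2_eq_square algebra_simps)
      moreover have "(a - 2)^2 \<ge> 2"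
      proof -
        have "(14::real)^2 \<le> (a - 2)^2" using a16 by (intro power_mono) auto
        thus ?thesis by simp
      qed
      ultimately show ?thesis by linarith
    qed
    ultimately show ?thesis by linarith
  qed
  hence expo: "n * t^2 / 2 \<ge> 8 * m^2 * (K * L) + ln (2 / \<delta>)"
    using nt2 a2 b2 by (simp add: mult_ac)
  have lnB: "ln (exp 1 * (2 * n) / K) \<le> 2 * L"
  proof -
    have "ln (2 * (exp 1 * n / K)) = ln 2 + ln (exp 1 * n / K)" by (subst ln_mult) (use npos Kpos in auto)
    hence "ln (exp 1 * (2 * n) / K) = ln 2 + L" by (simp add: L_def mult_ac)
    moreover have "ln 2 \<le> (1::real)" using ln_2_less_1 by simp
    ultimately show ?thesis using L1 by linarith
  qed
  have Bpos: "exp 1 * (2 * n) / K > 0" using npos Kpos by simp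
  have "(exp 1 * (2 * n) / K) powr (K * m * m) = exp (K * m * m * ln (exp 1 * (2 * n) / K))"
    using Bpos npos Kpos by (simp add: powr_def)
  also have "\<dots> \<le> exp (K * m * m * (2 * L))"
    using lnB K m by (intro exp_mono mult_left_mono) auto
  finally have Bb: "(exp 1 * (2 * n) / K) powr (K * m * m) \<le> exp (2 * m^2 * (K * L))"
    by (simp add: power2_eq_square mult_ac)
  have "4 * (exp 1 * (2 * n) / K) powr (K * m * m) * exp (- n * t^2 / 2)
        \<le> 4 * exp (2 * m^2 * (K * L)) * exp (- (8 * m^2 * (K * L) + ln (2 / \<delta>)))"
    using Bb expo by (intro mult_mono) auto
  also have "\<dots> = 4 * exp (- (6 * m^2 * (K * L))) * exp (- ln (2 / \<delta>))"
    by (simp add: mult_ac flip: exp_add)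
  also have "exp (- ln (2 / \<delta>)) = \<delta> / 2"
    using \<delta> by (simp add: exp_minus)
  also have "exp (- (6 * m^2 * (K * L))) \<le> 1 / 2"
  proof -
    have x: "6 * m^2 * (K * L) \<ge> 1"
    proof -
      have "(2::real)^2 \<le> m^2" using m by (intro power_mono) auto
      hence "4 * 2 \<le> m^2 * (K * L)" using KL by (intro mult_mono) auto
      thus ?thesis by simp
    qed
    have "1 + 6 * m^2 * (K * L) \<le> exp (6 * m^2 * (K * L))" by (rule exp_ge_add_one_self)
    hence "2 \<le> exp (6 * m^2 * (K * L))" using x by linarith
    thus ?thesis by (simp add: exp_minus field_simps)
  qed
  hence "4 * exp (- (6 * m^2 * (K * L))) * (\<delta> / 2) \<le> 4 * (1/2) * (\<delta> / 2)"
    using \<delta> by (intro mult_right_mono mult_left_mono) auto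
  finally show "4 * (exp 1 * (2 * n) / K) powr (K * m * m) * exp (- n * t^2 / 2) \<le> \<delta>" by simp
qed

lemma gfun_nonneg: "0 \<le> gfun m p z"
  unfolding gfun_def by (intro mult_nonneg_nonneg sum_nonneg) auto

lemma gfun_le1: "gfun m p z \<le> 1"
proof (cases "m = 0")
  case True thus ?thesis by (simp add: gfun_def)
next
  case False
  have "(\<Sum>j<m. if (\<exists>j'<m. j' \<noteq> j \<and> fst (p (j,j')) + snd (p (j,j')) \<bullet> z < 0) then 1 else 0) \<le> (\<Sum>j<m. (1::real))"
    by (intro sum_mono) auto
  thus ?thesis using False by (simp add: gfun_def field_simps)
qed

lemma gfun_measurable[measurable]: "gfun m p \<in> borel_measurable borel"
  unfolding gfun_def by measurable

definition combine :: "nat \<Rightarrow> (nat \<Rightarrow> 'a) \<times> (nat \<Rightarrow> 'a) \<Rightarrow> nat \<Rightarrow> 'a" where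
  "combine n w = (\<lambda>i\<in>{..<2*n}. if i < n then fst w i else snd w (i - n))"

lemma combine_measurable:
  "combine n \<in> measurable (PiM {..<n} (\<lambda>_. M) \<Otimes>\<^sub>M PiM {..<n} (\<lambda>_. M)) (PiM {..<2*n} (\<lambda>_. M))"
  unfolding combine_def
proof (rule measurable_restrict)
  fix i assume i: "i \<in> {..<2*n}"
  show "(\<lambda>w. if i < n then fst w i else snd w (i - n))
        \<in> measurable (PiM {..<n} (\<lambda>_. M) \<Otimes>\<^sub>M PiM {..<n} (\<lambda>_. M)) M"
  proof (cases "i < n")
    case True
    thus ?thesis by simp measurable
  next
    case False
    hence "i - n < n" using i by auto
    thus ?thesis using False by simp measurable
  qed
qed

lemma combine_distr:
  assumes "prob_space M"
  shows "distr (PiM {..<n} (\<lambda>_. M) \<Otimes>\<^sub>M PiM {..<n} (\<lambda>_. M)) (PiM {..<2*n} (\<lambda>_. M)) (combine n)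
         = PiM {..<2*n} (\<lambda>_. M)"
proof -
  interpret product_prob_space "\<lambda>_. M" by (simp add: product_prob_space_def product_prob_space_axioms_def assms product_sigma_finite_def prob_space_imp_sigma_finite)
  interpret Pn: prob_space "PiM {..<n} (\<lambda>_. M)" by (rule prob_space_PiM) (simp add: assms)
  interpret PP: pair_sigma_finite "PiM {..<n} (\<lambda>_. M)" "PiM {..<n} (\<lambda>_. M)" 
    by (simp add: pair_sigma_finite_def Pn.sigma_finite_measure_axioms)
  show ?thesis
  proof (rule PiM_eqI)
    show "finite {..<2*n}" by simp
    show "sets (distr (PiM {..<n} (\<lambda>_. M) \<Otimes>\<^sub>M PiM {..<n} (\<lambda>_. M)) (PiM {..<2*n} (\<lambda>_. M)) (combine n)) = sets (PiM {..<2*n} (\<lambda>_. M))"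
      by simp
    fix A assume A: "\<And>i. i \<in> {..<2*n} \<Longrightarrow> A i \<in> sets M"
    have sp: "A i \<subseteq> space M" if "i < 2*n" for i using A[of i] that sets.sets_into_space by auto
    have pre: "combine n -` Pi\<^sub>E {..<2*n} A \<inter> space (PiM {..<n} (\<lambda>_. M) \<Otimes>\<^sub>M PiM {..<n} (\<lambda>_. M))
          = Pi\<^sub>E {..<n} A \<times> Pi\<^sub>E {..<n} (\<lambda>i. A (i + n))"
    proof (intro set_eqI iffI)
      fix w assume w: "w \<in> combine n -` Pi\<^sub>E {..<2*n} A \<inter> space (PiM {..<n} (\<lambda>_. M) \<Otimes>\<^sub>M PiM {..<n} (\<lambda>_. M))"
      obtain Z Z' where wz: "w = (Z, Z')" by force
      have Z: "Z \<in> space (PiM {..<n} (\<lambda>_. M))" "Z' \<in> space (PiM {..<n} (\<lambda>_. M))"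
        using w by (auto simp: wz space_pair_measure)
      have c: "combine n (Z, Z') \<in> Pi\<^sub>E {..<2*n} A" using w wz by simp
      have "Z i \<in> A i" if "i < n" for i
        using c that by (auto simp: combine_def PiE_iff dest!: bspec[of _ _ i])
      moreover have "Z' i \<in> A (i + n)" if "i < n" for i
        using c that by (auto simp: combine_def PiE_iff dest!: bspec[of _ _ "i + n"])
      ultimately show "w \<in> Pi\<^sub>E {..<n} A \<times> Pi\<^sub>E {..<n} (\<lambda>i. A (i + n))"
        using Z by (auto simp: wz space_PiM PiE_iff)
    next
      fix w assume w: "w \<in> Pi\<^sub>E {..<n} A \<times> Pi\<^sub>E {..<n} (\<lambda>i. A (i + n))"
      obtain Z Z' where wz: "w = (Z, Z')" by force
      have Z: "Z \<in> Pi\<^sub>E {..<n} A" "Z' \<in> Pi\<^sub>E {..<n} (\<lambda>i. A (i + n))" using w wz by auto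
      have "combine n (Z, Z') \<in> Pi\<^sub>E {..<2*n} A"
      proof -
        have "(if i < n then Z i else Z' (i - n)) \<in> A i" if "i < 2*n" for i
        proof (cases "i < n")
          case True thus ?thesis using Z by auto
        next
          case False
          hence "i - n < n" "i - n + n = i" using that by auto
          thus ?thesis using Z(2) False by (metis PiE_mem lessThan_iff)
        qed
        thus ?thesis unfolding combine_def fst_conv snd_conv restrict_PiE_iff by blast
      qed
      moreover have "Z \<in> space (PiM {..<n} (\<lambda>_. M))" "Z' \<in> space (PiM {..<n} (\<lambda>_. M))"
      proof -
        have "Z i \<in> space M" if "i<n" for i using Z(1) sp[of i] that by (auto simp: PiE_iff)
        moreover have "Z' i \<in> space M" if "i<n" for i using Z(2) sp[of "i+n"] that by (auto simp: PiE_iff)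
        ultimately show "Z \<in> space (PiM {..<n} (\<lambda>_. M))" "Z' \<in> space (PiM {..<n} (\<lambda>_. M))"
          using Z by (auto simp: space_PiM PiE_iff)
      qed
      ultimately show "w \<in> combine n -` Pi\<^sub>E {..<2*n} A \<inter> space (PiM {..<n} (\<lambda>_. M) \<Otimes>\<^sub>M PiM {..<n} (\<lambda>_. M))"
        by (simp add: wz space_pair_measure)
    qed
    have mA: "Pi\<^sub>E {..<2*n} A \<in> sets (PiM {..<2*n} (\<lambda>_. M))"
      using A by (intro sets_PiM_I_finite) auto
    have "emeasure (distr (PiM {..<n} (\<lambda>_. M) \<Otimes>\<^sub>M PiM {..<n} (\<lambda>_. M)) (PiM {..<2*n} (\<lambda>_. M)) (combine n)) (Pi\<^sub>E {..<2*n} A)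
        = emeasure (PiM {..<n} (\<lambda>_. M) \<Otimes>\<^sub>M PiM {..<n} (\<lambda>_. M)) (Pi\<^sub>E {..<n} A \<times> Pi\<^sub>E {..<n} (\<lambda>i. A (i + n)))"
      by (subst emeasure_distr[OF combine_measurable mA]) (simp add: pre)
    also have "\<dots> = emeasure (PiM {..<n} (\<lambda>_. M)) (Pi\<^sub>E {..<n} A) * emeasure (PiM {..<n} (\<lambda>_. M)) (Pi\<^sub>E {..<n} (\<lambda>i. A (i + n)))"
      by (rule Pn.emeasure_pair_measure_Times) (use A in \<open>auto intro!: sets_PiM_I_finite\<close>)
    also have "\<dots> = (\<Prod>i<n. emeasure M (A i)) * (\<Prod>i<n. emeasure M (A (i + n)))"
    proof -
      have "emeasure (PiM {..<n} (\<lambda>_. M)) (Pi\<^sub>E {..<n} A) = (\<Prod>i<n. emeasure M (A i))"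
        by (rule emeasure_PiM) (use A in auto)
      moreover have "emeasure (PiM {..<n} (\<lambda>_. M)) (Pi\<^sub>E {..<n} (\<lambda>i. A (i + n))) = (\<Prod>i<n. emeasure M (A (i + n)))"
        by (rule emeasure_PiM) (use A in auto)
      ultimately show ?thesis by simp
    qed
    also have "\<dots> = (\<Prod>i<2*n. emeasure M (A i))"
    proof -
      have "(\<Prod>i<n. emeasure M (A (i + n))) = (\<Prod>i\<in>{n..<n+n}. emeasure M (A i))"
        using prod.shift_bounds_nat_ivl[of "\<lambda>i. emeasure M (A i)" 0 n n] by (simp add: atLeast0LessThan)
      moreover have "(\<Prod>i<n. emeasure M (A i)) * (\<Prod>i\<in>{n..<n+n}. emeasure M (A i)) = (\<Prod>i<n+n. emeasure M (A i))"
        using prod.atLeastLessThan_concat[of 0 n "n+n" "\<lambda>i. emeasure M (A i)"] by (simp add: atLeast0LessThan)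
      ultimately show ?thesis by (simp add: mult_2)
    qed
    finally show "emeasure (distr (PiM {..<n} (\<lambda>_. M) \<Otimes>\<^sub>M PiM {..<n} (\<lambda>_. M)) (PiM {..<2*n} (\<lambda>_. M)) (combine n)) (Pi\<^sub>E {..<2*n} A)
        = (\<Prod>i\<in>{..<2*n}. emeasure M (A i))" by simp
  qed
qed

lemma reindex_invariant:
  assumes "prob_space M" and "bij_betw \<pi> {..<N} {..<N}"
  shows "distr (PiM {..<N} (\<lambda>_. M)) (PiM {..<N} (\<lambda>_. M)) (\<lambda>\<omega>. \<lambda>i\<in>{..<N}. \<omega> (\<pi> i)) = PiM {..<N} (\<lambda>_. M)"
  using distr_PiM_reindex[of "{..<N}" "\<lambda>_. M" \<pi> "{..<N}"] assms
  by (auto simp: bij_betw_def)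

definition swp :: "nat \<Rightarrow> (nat \<Rightarrow> bool) \<Rightarrow> nat \<Rightarrow> nat" where
  "swp n \<sigma> i = (if i < n then (if \<sigma> i then i + n else i)
                else if i < 2*n then (if \<sigma> (i - n) then i - n else i) else i)"

definition sw :: "nat \<Rightarrow> (nat \<Rightarrow> bool) \<Rightarrow> (nat \<Rightarrow> 'a) \<Rightarrow> nat \<Rightarrow> 'a" where
  "sw n \<sigma> \<omega> = (\<lambda>i\<in>{..<2*n}. \<omega> (swp n \<sigma> i))"

lemma swp_bij: "bij_betw (swp n \<sigma>) {..<2*n} {..<2*n}"
proof (rule bij_betw_byWitness[of _ "swp n \<sigma>"])
  show "\<forall>a\<in>{..<2*n}. swp n \<sigma> (swp n \<sigma> a) = a" by (auto simp: swp_def)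
  show "\<forall>a\<in>{..<2*n}. swp n \<sigma> (swp n \<sigma> a) = a" by (auto simp: swp_def)
  show "swp n \<sigma> ` {..<2*n} \<subseteq> {..<2*n}" by (auto simp: swp_def)
  show "swp n \<sigma> ` {..<2*n} \<subseteq> {..<2*n}" by (auto simp: swp_def)
qed

lemma sw_lo: "i < n \<Longrightarrow> sw n \<sigma> \<omega> i = \<omega> (if \<sigma> i then i + n else i)"
  by (simp add: sw_def swp_def)

lemma sw_hi: "i < n \<Longrightarrow> sw n \<sigma> \<omega> (i + n) = \<omega> (if \<sigma> i then i else i + n)"
  by (simp add: sw_def swp_def)

lemma count_bad:
  fixes \<omega> :: "nat \<Rightarrow> real^'d"
  assumes t: "t \<ge> 0" and N: "CARD('d) + 1 \<le> 2*n"
  shows "real (card {\<sigma> \<in> Pi\<^sub>E {..<n} (\<lambda>_. UNIV::bool set). \<exists>p.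
            \<bar>\<Sum>i<n. gfun m p (sw n \<sigma> \<omega> i) - gfun m p (sw n \<sigma> \<omega> (i + n))\<bar> > real n * t})
         \<le> real (card (halfsp \<omega> (2*n))) ^ (m*m) * (2 * 2^n * exp (- real n * t^2 / 2))"
proof -
  define H where "H = halfsp \<omega> (2*n)"
  define pairs where "pairs = {..<m} \<times> {..<m}"
  define vec where "vec = (\<lambda>p. \<lambda>i\<in>{..<2*n}. gfun m p (\<omega> i))"
  define V where "V = range vec"
  define \<Phi> where "\<Phi> = (\<lambda>\<tau> :: nat \<times> nat \<Rightarrow> nat set. \<lambda>i\<in>{..<2*n}. (1 / real m) *
       (\<Sum>j<m. if (\<exists>j'<m. j' \<noteq> j \<and> i \<in> \<tau> (j,j')) then 1 else (0::real)))"
  define \<Sigma> where "\<Sigma> = Pi\<^sub>E {..<n} (\<lambda>_. UNIV::bool set)"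
  have finH: "finite H" unfolding H_def by (rule card_halfsp(1)[OF N])
  have VPhi: "V \<subseteq> \<Phi> ` (Pi\<^sub>E pairs (\<lambda>_. H))"
  proof
    fix v assume "v \<in> V"
    then obtain p where v: "v = vec p" by (auto simp: V_def)
    define \<tau> where "\<tau> = (\<lambda>k\<in>pairs. {i. i < 2*n \<and> fst (p k) + snd (p k) \<bullet> \<omega> i < 0})"
    have "\<tau> \<in> Pi\<^sub>E pairs (\<lambda>_. H)"
      by (auto simp: \<tau>_def H_def halfsp_def)
    moreover have "v = \<Phi> \<tau>"
      unfolding v vec_def \<Phi>_def gfun_def
    proof (intro ext)
      fix i
      show "(\<lambda>i\<in>{..<2*n}. 1 / real m * (\<Sum>j<m. if \<exists>j'<m. j' \<noteq> j \<and> fst (p (j, j')) + snd (p (j, j')) \<bullet> \<omega> i < 0 then 1 else 0)) i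
          = (\<lambda>i\<in>{..<2*n}. 1 / real m * (\<Sum>j<m. if \<exists>j'<m. j' \<noteq> j \<and> i \<in> \<tau> (j, j') then 1 else 0)) i"
        by (cases "i < 2*n") (auto simp: \<tau>_def pairs_def intro!: sum.cong arg_cong[where f="\<lambda>s. 1 / real m * s"])
    qed
    ultimately show "v \<in> \<Phi> ` (Pi\<^sub>E pairs (\<lambda>_. H))" by blast
  qed
  have finPi: "finite (Pi\<^sub>E pairs (\<lambda>_. H))" using finH by (auto simp: pairs_def intro!: finite_PiE)
  have finV: "finite V" using VPhi finPi by (meson finite_imageI finite_subset)
  have cardV: "card V \<le> card H ^ (m*m)"
  proof -
    have "card V \<le> card (\<Phi> ` (Pi\<^sub>E pairs (\<lambda>_. H)))" using VPhi finPi by (intro card_mono) auto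
    also have "\<dots> \<le> card (Pi\<^sub>E pairs (\<lambda>_. H))" by (rule card_image_le[OF finPi])
    also have "\<dots> = card H ^ (m*m)" by (simp add: card_PiE pairs_def card_cartesian_product)
    finally show ?thesis .
  qed
  define a where "a = (\<lambda>v::nat \<Rightarrow> real. \<lambda>i. v i - v (i + n))"
  define Bp where "Bp = (\<lambda>v. {\<sigma> \<in> \<Sigma>. (\<Sum>i<n. if \<sigma> i then - a v i else a v i) \<ge> real n * t})"
  define Bm where "Bm = (\<lambda>v. {\<sigma> \<in> \<Sigma>. (\<Sum>i<n. if \<sigma> i then - (- a v i) else - a v i) \<ge> real n * t})"
  have vbound: "\<bar>a v i\<bar> \<le> 1" if vin: "v \<in> V" and iin: "i < n" for v i
  proof -
    obtain p where v: "v = vec p" using vin unfolding V_def by blast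
    have "i < 2*n" "i + n < 2*n" using iin by auto
    thus ?thesis using gfun_nonneg[of m p] gfun_le1[of m p]
      by (auto simp: a_def v vec_def abs_le_iff) (smt (verit) gfun_le1 gfun_nonneg)+
  qed
  have finS: "finite \<Sigma>" by (simp add: \<Sigma>_def finite_PiE)
  have sub: "{\<sigma> \<in> \<Sigma>. \<exists>p. \<bar>\<Sum>i<n. gfun m p (sw n \<sigma> \<omega> i) - gfun m p (sw n \<sigma> \<omega> (i + n))\<bar> > real n * t}
             \<subseteq> (\<Union>v\<in>V. Bp v \<union> Bm v)"
  proof safe
    fix \<sigma> p assume \<sigma>: "\<sigma> \<in> \<Sigma>" and gt: "\<bar>\<Sum>i<n. gfun m p (sw n \<sigma> \<omega> i) - gfun m p (sw n \<sigma> \<omega> (i + n))\<bar> > real n * t"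
    define v where "v = vec p"
    have vV: "v \<in> V" by (simp add: v_def V_def)
    have eq: "gfun m p (sw n \<sigma> \<omega> i) - gfun m p (sw n \<sigma> \<omega> (i + n)) = (if \<sigma> i then - a v i else a v i)"
      if "i < n" for i
      using that by (simp add: sw_lo sw_hi a_def v_def vec_def)
    have "(\<Sum>i<n. gfun m p (sw n \<sigma> \<omega> i) - gfun m p (sw n \<sigma> \<omega> (i + n))) = (\<Sum>i<n. if \<sigma> i then - a v i else a v i)"
      by (intro sum.cong) (auto simp: eq)
    hence gt': "\<bar>\<Sum>i<n. if \<sigma> i then - a v i else a v i\<bar> > real n * t" using gt by simp
    have neg: "(\<Sum>i<n. if \<sigma> i then - (- a v i) else - a v i) = - (\<Sum>i<n. if \<sigma> i then - a v i else a v i)"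
      by (simp add: sum_negf[symmetric] if_distrib)
    have "\<sigma> \<in> Bp v \<or> \<sigma> \<in> Bm v"
      using gt' \<sigma> neg by (auto simp: Bp_def Bm_def abs_if split: if_splits)
    thus "\<sigma> \<in> (\<Union>v\<in>V. Bp v \<union> Bm v)" using vV by blast
  qed
  have "card {\<sigma> \<in> \<Sigma>. \<exists>p. \<bar>\<Sum>i<n. gfun m p (sw n \<sigma> \<omega> i) - gfun m p (sw n \<sigma> \<omega> (i + n))\<bar> > real n * t}
        \<le> card (\<Union>v\<in>V. Bp v \<union> Bm v)"
    by (intro card_mono sub) (use finV finS in \<open>auto simp: Bp_def Bm_def\<close>)
  also have "\<dots> \<le> (\<Sum>v\<in>V. card (Bp v \<union> Bm v))" by (rule card_UN_le[OF finV])
  also have "\<dots> \<le> (\<Sum>v\<in>V. card (Bp v) + card (Bm v))" by (intro sum_mono card_Un_le)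
  finally have c1: "real (card {\<sigma> \<in> \<Sigma>. \<exists>p. \<bar>\<Sum>i<n. gfun m p (sw n \<sigma> \<omega> i) - gfun m p (sw n \<sigma> \<omega> (i + n))\<bar> > real n * t})
        \<le> (\<Sum>v\<in>V. real (card (Bp v)) + real (card (Bm v)))" by (simp flip: of_nat_add of_nat_sum)
  also have "\<dots> \<le> (\<Sum>v\<in>V. 2 * (2^n * exp (- real n * t^2 / 2)))"
  proof (intro sum_mono)
    fix v assume v: "v \<in> V"
    have "real (card (Bp v)) \<le> 2^n * exp (- real n * t^2 / 2)"
      unfolding Bp_def \<Sigma>_def by (rule rademacher_count) (use vbound[OF v] t in auto)
    moreover have "real (card (Bm v)) \<le> 2^n * exp (- real n * t^2 / 2)"
      unfolding Bm_def \<Sigma>_def by (rule rademacher_count) (use vbound[OF v] t in auto)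
    ultimately show "real (card (Bp v)) + real (card (Bm v)) \<le> 2 * (2^n * exp (- real n * t^2 / 2))" by simp
  qed
  also have "\<dots> = real (card V) * (2 * 2^n * exp (- real n * t^2 / 2))" by simp
  also have "\<dots> \<le> real (card H) ^ (m*m) * (2 * 2^n * exp (- real n * t^2 / 2))"
    by (intro mult_right_mono) (use cardV in \<open>auto simp flip: of_nat_power\<close>)
  finally show ?thesis by (simp add: \<Sigma>_def H_def)
qed

lemma sw_measurable:
  "sw n \<sigma> \<in> measurable (PiM {..<2*n} (\<lambda>_. M)) (PiM {..<2*n} (\<lambda>_. M))"
  unfolding sw_def
proof (rule measurable_restrict)
  fix i assume "i \<in> {..<2*n}"
  hence "swp n \<sigma> i \<in> {..<2*n}" using swp_bij[of n \<sigma>] by (auto simp: bij_betw_def)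
  thus "(\<lambda>x. x (swp n \<sigma> i)) \<in> measurable (PiM {..<2*n} (\<lambda>_. M)) M" by measurable
qed

lemma sw_space: "\<omega> \<in> space (PiM {..<2*n} (\<lambda>_. M)) \<Longrightarrow> sw n \<sigma> \<omega> \<in> space (PiM {..<2*n} (\<lambda>_. M))"
  using measurable_space[OF sw_measurable] by blast

lemma F_bound:
  fixes \<mu> :: "(real^'d) measure" and F :: "(nat \<Rightarrow> real^'d) set"
  assumes \<mu>: "prob_space \<mu>" and t: "t \<ge> 0" and N: "CARD('d) + 1 \<le> 2*n"
    and Fm: "F \<in> sets (PiM {..<2*n} (\<lambda>_. \<mu>))"
    and Fsub: "\<And>\<omega>. \<omega> \<in> F \<Longrightarrow> \<exists>p. \<bar>\<Sum>i<n. gfun m p (\<omega> i) - gfun m p (\<omega> (i + n))\<bar> > real n * t"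
  shows "emeasure (PiM {..<2*n} (\<lambda>_. \<mu>)) F
         \<le> ennreal (((exp 1 * real (2*n) / real (CARD('d) + 1)) ^ (CARD('d) + 1)) ^ (m*m) * (2 * exp (- real n * t^2 / 2)))"
proof -
  define P2 where "P2 = PiM {..<2*n} (\<lambda>_. \<mu>)"
  define \<Sigma> where "\<Sigma> = Pi\<^sub>E {..<n} (\<lambda>_. UNIV::bool set)"
  define B where "B = ((exp 1 * real (2*n) / real (CARD('d) + 1)) ^ (CARD('d) + 1)) ^ (m*m)"
  define E where "E = exp (- real n * t^2 / 2)"
  interpret P2: prob_space P2 unfolding P2_def by (rule prob_space_PiM) (simp add: \<mu>)
  have finS: "finite \<Sigma>" by (simp add: \<Sigma>_def finite_PiE)
  have cardS: "card \<Sigma> = 2^n" by (simp add: \<Sigma>_def card_PiE)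
  have Fm': "F \<in> sets P2" using Fm by (simp add: P2_def)
  have inv: "emeasure P2 (sw n \<sigma> -` F \<inter> space P2) = emeasure P2 F" for \<sigma>
  proof -
    have "emeasure P2 F = emeasure (distr P2 P2 (sw n \<sigma>)) F"
      unfolding P2_def sw_def using reindex_invariant[OF \<mu> swp_bij[of n \<sigma>]] by simp
    also have "\<dots> = emeasure P2 (sw n \<sigma> -` F \<inter> space P2)"
      by (rule emeasure_distr[OF _ Fm']) (simp add: P2_def sw_measurable)
    finally show ?thesis by simp
  qed
  have pw: "(\<Sum>\<sigma>\<in>\<Sigma>. indicator (sw n \<sigma> -` F \<inter> space P2) \<omega>) \<le> ennreal (B * (2 * 2^n * E))"
    if \<omega>: "\<omega> \<in> space P2" for \<omega>
  proof -
    have "(\<Sum>\<sigma>\<in>\<Sigma>. indicator (sw n \<sigma> -` F \<inter> space P2) \<omega>) = (\<Sum>\<sigma>\<in>\<Sigma>. if sw n \<sigma> \<omega> \<in> F then 1 else (0::ennreal))"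
      using \<omega> by (intro sum.cong) (auto simp: indicator_def)
    also have "\<dots> = of_nat (card {\<sigma> \<in> \<Sigma>. sw n \<sigma> \<omega> \<in> F})"
      using finS by (simp add: sum.inter_filter[OF finS, symmetric])
    also have "\<dots> = ennreal (real (card {\<sigma> \<in> \<Sigma>. sw n \<sigma> \<omega> \<in> F}))"
      by (simp add: ennreal_of_nat_eq_real_of_nat)
    also have "\<dots> \<le> ennreal (B * (2 * 2^n * E))"
    proof (rule ennreal_leI)
      have "card {\<sigma> \<in> \<Sigma>. sw n \<sigma> \<omega> \<in> F}
          \<le> card {\<sigma> \<in> \<Sigma>. \<exists>p. \<bar>\<Sum>i<n. gfun m p (sw n \<sigma> \<omega> i) - gfun m p (sw n \<sigma> \<omega> (i + n))\<bar> > real n * t}"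
        using finS Fsub by (intro card_mono) auto
      hence "real (card {\<sigma> \<in> \<Sigma>. sw n \<sigma> \<omega> \<in> F})
          \<le> real (card {\<sigma> \<in> \<Sigma>. \<exists>p. \<bar>\<Sum>i<n. gfun m p (sw n \<sigma> \<omega> i) - gfun m p (sw n \<sigma> \<omega> (i + n))\<bar> > real n * t})"
        by linarith
      also have "\<dots> \<le> real (card (halfsp \<omega> (2*n))) ^ (m*m) * (2 * 2^n * E)"
        unfolding \<Sigma>_def E_def by (rule count_bad[OF t N])
      also have "\<dots> \<le> B * (2 * 2^n * E)"
        unfolding B_def
        by (intro mult_right_mono power_mono card_halfsp(2)[OF N]) (auto simp: E_def)
      finally show "real (card {\<sigma> \<in> \<Sigma>. sw n \<sigma> \<omega> \<in> F}) \<le> B * (2 * 2^n * E)" .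
    qed
    finally show ?thesis .
  qed
  have "of_nat (2^n) * emeasure P2 F = (\<Sum>\<sigma>\<in>\<Sigma>. emeasure P2 F)" by (simp add: cardS)
  also have "\<dots> = (\<Sum>\<sigma>\<in>\<Sigma>. emeasure P2 (sw n \<sigma> -` F \<inter> space P2))" by (simp add: inv)
  also have "\<dots> = (\<Sum>\<sigma>\<in>\<Sigma>. \<integral>\<^sup>+\<omega>. indicator (sw n \<sigma> -` F \<inter> space P2) \<omega> \<partial>P2)"
  proof (intro sum.cong refl)
    fix \<sigma>
    have "sw n \<sigma> -` F \<inter> space P2 \<in> sets P2"
      using measurable_sets[OF sw_measurable Fm] by (simp add: P2_def)
    thus "emeasure P2 (sw n \<sigma> -` F \<inter> space P2) = (\<integral>\<^sup>+\<omega>. indicator (sw n \<sigma> -` F \<inter> space P2) \<omega> \<partial>P2)"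
      by simp
  qed
  also have "\<dots> = (\<integral>\<^sup>+\<omega>. (\<Sum>\<sigma>\<in>\<Sigma>. indicator (sw n \<sigma> -` F \<inter> space P2) \<omega>) \<partial>P2)"
  proof (rule nn_integral_sum[symmetric])
    fix \<sigma>
    have "sw n \<sigma> -` F \<inter> space P2 \<in> sets P2"
      using measurable_sets[OF sw_measurable Fm] by (simp add: P2_def)
    thus "(\<lambda>\<omega>. indicator (sw n \<sigma> -` F \<inter> space P2) \<omega> :: ennreal) \<in> borel_measurable P2" by simp
  qed
  also have "\<dots> \<le> (\<integral>\<^sup>+\<omega>. ennreal (B * (2 * 2^n * E)) \<partial>P2)"
    by (intro nn_integral_mono pw)
  also have "\<dots> = ennreal (B * (2 * 2^n * E))" by (simp add: P2.emeasure_space_1)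
  finally have "of_nat (2^n) * emeasure P2 F \<le> ennreal (B * (2 * 2^n * E))" .
  also have "ennreal (B * (2 * 2^n * E)) = of_nat (2^n) * ennreal (B * (2 * E))"
    by (simp add: ennreal_of_nat_eq_real_of_nat ennreal_mult'[symmetric] mult_ac B_def E_def)
  finally have "of_nat (2^n) * emeasure P2 F \<le> of_nat (2^n) * ennreal (B * (2 * E))" .
  hence "emeasure P2 F \<le> ennreal (B * (2 * E))"
    by (subst (asm) ennreal_mult_le_mult_iff) (auto simp: power_eq_top_ennreal)
  thus ?thesis by (simp add: P2_def B_def E_def)
qed

lemma gfun_measurable_mu:
  assumes "sets \<mu> = sets borel"
  shows "gfun m p \<in> borel_measurable \<mu>"
  using gfun_measurable[of m p] measurable_cong_sets[OF assms refl] by blast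

lemma hoeffding_gfun:
  fixes \<mu> :: "(real^'d) measure"
  assumes \<mu>: "prob_space \<mu>" and s\<mu>: "sets \<mu> = sets borel" and n: "n \<ge> 1"
  shows "measure (PiM {..<n} (\<lambda>_. \<mu>))
           {Z \<in> space (PiM {..<n} (\<lambda>_. \<mu>)). \<bar>(\<Sum>i<n. gfun m p (Z i)) - real n * (\<integral>z. gfun m p z \<partial>\<mu>)\<bar> \<ge> sqrt (real n)}
         \<le> 2 * exp (-2)"
proof -
  define P where "P = PiM {..<n} (\<lambda>_. \<mu>)"
  define X where "X = (\<lambda>i (Z :: nat \<Rightarrow> real^'d). gfun m p (Z i))"
  interpret P: prob_space P unfolding P_def by (rule prob_space_PiM) (simp add: \<mu>)
  have ne: "{..<n} \<noteq> {}" using n by (auto simp: lessThan_empty_iff)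
  have comp: "P.indep_vars (\<lambda>_. \<mu>) (\<lambda>i Z. Z i) {..<n}" if "P = P" 
  proof -
    have "distr P (PiM {..<n} (\<lambda>_. \<mu>)) (\<lambda>x. \<lambda>i\<in>{..<n}. x i) = distr P P (\<lambda>x. x)"
      by (intro distr_cong) (auto simp: P_def space_PiM PiE_iff extensional_restrict)
    also have "\<dots> = P" by simp
    also have "\<dots> = PiM {..<n} (\<lambda>i. distr P \<mu> (\<lambda>x. x i))"
      unfolding P_def by (intro PiM_cong refl distr_PiM_component[symmetric]) (auto simp: \<mu>)
    finally have "distr P (PiM {..<n} (\<lambda>_. \<mu>)) (\<lambda>x. \<lambda>i\<in>{..<n}. x i) = PiM {..<n} (\<lambda>i. distr P \<mu> (\<lambda>x. x i))" .
    moreover have rv: "\<And>i. i \<in> {..<n} \<Longrightarrow> (\<lambda>Z. Z i) \<in> measurable P \<mu>"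
      using measurable_component_singleton[of _ "{..<n}" "\<lambda>_. \<mu>"] by (simp add: P_def)
    ultimately show ?thesis
      using P.indep_vars_iff_distr_eq_PiM'[OF ne rv] by simp
  qed
  have indep: "P.indep_vars (\<lambda>_. borel) X {..<n}"
    unfolding X_def by (rule P.indep_vars_compose2[OF comp[OF refl]]) (rule gfun_measurable_mu[OF s\<mu>])
  have expX: "P.expectation (X i) = (\<integral>z. gfun m p z \<partial>\<mu>)" if "i < n" for i
  proof -
    have "(\<integral>z. gfun m p z \<partial>\<mu>) = (\<integral>z. gfun m p z \<partial>(distr P \<mu> (\<lambda>Z. Z i)))"
      unfolding P_def using that by (subst distr_PiM_component) (auto simp: \<mu>)
    also have "\<dots> = P.expectation (X i)"
      unfolding X_def using that by (subst integral_distr) (auto simp: P_def gfun_measurable_mu[OF s\<mu>])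
    finally show ?thesis by simp
  qed
  interpret H: Hoeffding_ineq P "{..<n}" X "\<lambda>_. 0" "\<lambda>_. 1" "\<Sum>i<n. P.expectation (X i)"
  proof unfold_locales
    show "finite {..<n}" by simp
    show "P.indep_vars (\<lambda>_. borel) X {..<n}" by (rule indep)
    fix i show "AE x in P. X i x \<in> {0..1}" by (auto simp: X_def gfun_nonneg gfun_le1)
  qed simp
  have mu: "(\<Sum>i<n. P.expectation (X i)) = real n * (\<integral>z. gfun m p z \<partial>\<mu>)"
    by (simp add: expX)
  have "P.prob {x \<in> space P. \<bar>(\<Sum>i<n. X i x) - (\<Sum>i<n. P.expectation (X i))\<bar> \<ge> sqrt (real n)}
        \<le> 2 * exp (-2 * (sqrt (real n))\<^sup>2 / (\<Sum>i<n. (1 - 0)\<^sup>2))"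
    by (rule H.Hoeffding_ineq_abs_ge) (use n in auto)
  also have "-2 * (sqrt (real n))\<^sup>2 / (\<Sum>i<n. (1 - 0)\<^sup>2) = -2"
    using n by simp
  finally have h: "P.prob {x \<in> space P. \<bar>(\<Sum>i<n. X i x) - (\<Sum>i<n. P.expectation (X i))\<bar> \<ge> sqrt (real n)} \<le> 2 * exp (-2)" .
  show ?thesis using h unfolding mu by (simp add: P_def X_def)
qed

lemma sum_gfun_measurable:
  fixes n :: nat
  assumes "sets \<mu> = sets borel"
  shows "(\<lambda>Z. \<Sum>i<n. gfun m p (Z i)) \<in> borel_measurable (PiM {..<n} (\<lambda>_. \<mu>))"
proof (rule borel_measurable_sum)
  fix i assume "i \<in> {..<n}"
  hence "(\<lambda>Z. Z i) \<in> measurable (PiM {..<n} (\<lambda>_. \<mu>)) \<mu>" by (rule measurable_component_singleton)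
  thus "(\<lambda>Z. gfun m p (Z i)) \<in> borel_measurable (PiM {..<n} (\<lambda>_. \<mu>))"
    by (rule measurable_compose[OF _ gfun_measurable_mu[OF assms]])
qed

lemma diff_gfun_measurable:
  fixes n :: nat
  assumes "sets \<mu> = sets borel"
  shows "(\<lambda>\<omega>. \<Sum>i<n. gfun m p (\<omega> i) - gfun m p (\<omega> (i + n))) \<in> borel_measurable (PiM {..<2*n} (\<lambda>_. \<mu>))"
proof (rule borel_measurable_sum)
  fix i assume i: "i \<in> {..<n}"
  have i2: "i \<in> {..<2*n}" "i + n \<in> {..<2*n}" using i by auto
  have "(\<lambda>\<omega>. \<omega> i) \<in> measurable (PiM {..<2*n} (\<lambda>_. \<mu>)) \<mu>" by (rule measurable_component_singleton[OF i2(1)])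
  hence "(\<lambda>\<omega>. gfun m p (\<omega> i)) \<in> borel_measurable (PiM {..<2*n} (\<lambda>_. \<mu>))"
    by (rule measurable_compose[OF _ gfun_measurable_mu[OF assms]])
  moreover have "(\<lambda>\<omega>. \<omega> (i + n)) \<in> measurable (PiM {..<2*n} (\<lambda>_. \<mu>)) \<mu>" by (rule measurable_component_singleton[OF i2(2)])
  hence "(\<lambda>\<omega>. gfun m p (\<omega> (i + n))) \<in> borel_measurable (PiM {..<2*n} (\<lambda>_. \<mu>))"
    by (rule measurable_compose[OF _ gfun_measurable_mu[OF assms]])
  ultimately show "(\<lambda>\<omega>. gfun m p (\<omega> i) - gfun m p (\<omega> (i + n))) \<in> borel_measurable (PiM {..<2*n} (\<lambda>_. \<mu>))"
    by (rule borel_measurable_diff)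
qed

theorem theorem1:
  fixes \<mu> :: "(real^'d) measure" and m n :: nat and \<delta> :: real
  assumes "prob_space \<mu>" and "sets \<mu> = sets borel"
    and "m \<ge> 2" and "n \<ge> CARD('d) + 1"
    and "0 < \<delta>" and "\<delta> < 1"
  shows "\<exists>A \<in> sets (PiM {..<n} (\<lambda>_. \<mu>)).
           measure (PiM {..<n} (\<lambda>_. \<mu>)) A \<ge> 1 - \<delta> \<and>
           (\<forall>Z\<in>A. \<forall>x :: nat \<Rightarrow> real^'d. \<forall>S :: real^'d^'d. pos_def S \<longrightarrow>
              \<bar>Pe_mu \<mu> m x S - Pe_emp n Z m x S\<bar>
                \<le> 4 * real m * sqrt (2 * (real CARD('d) + 1) * ln (exp 1 * real n / (real CARD('d) + 1)) / real n)
                  + sqrt (2 * ln (2 / \<delta>) / real n))"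
proof -
  note \<mu> = assms(1) and s\<mu> = assms(2) and m2 = assms(3) and nK = assms(4) and \<delta> = assms(5,6)
  define \<epsilon> where "\<epsilon> = 4 * real m * sqrt (2 * (real CARD('d) + 1) * ln (exp 1 * real n / (real CARD('d) + 1)) / real n)
                  + sqrt (2 * ln (2 / \<delta>) / real n)"
  define t where "t = \<epsilon> - 1 / sqrt (real n)"
  have cardpos: "CARD('d) \<ge> 1" by (simp add: Suc_leI)
  have n1: "n \<ge> 1" using nK by simp
  have npos: "real n > 0" using n1 by simp
  have ar: "t \<ge> 0"
     "4 * (exp 1 * (2 * real n) / (real CARD('d) + 1)) powr ((real CARD('d) + 1) * real m * real m) * exp (- real n * t^2 / 2) \<le> \<delta>"
    using arith_main[of "real CARD('d) + 1" "real n" "real m" \<delta>] cardpos nK m2 \<delta>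
    unfolding \<epsilon>_def t_def by auto
  define B where "B = ((exp 1 * real (2*n) / real (CARD('d) + 1)) ^ (CARD('d) + 1)) ^ (m*m)"
  define E where "E = exp (- real n * t^2 / 2)"
  have BE: "4 * B * E \<le> \<delta>"
  proof -
    have pos: "exp 1 * (2 * real n) / (real CARD('d) + 1) > 0" using npos by simp
    have e1: "real (2*n) = 2 * real n" by simp
    have e2: "real (CARD('d)+1) = real CARD('d) + 1" by simp
    have "B = (exp 1 * (2 * real n) / (real CARD('d) + 1)) ^ ((CARD('d) + 1) * (m*m))"
      unfolding B_def e1 e2 by (rule power_mult[symmetric])
    also have "\<dots> = (exp 1 * (2 * real n) / (real CARD('d) + 1)) powr (real ((CARD('d) + 1) * (m*m)))"
      by (rule powr_realpow[symmetric, OF pos])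
    also have "real ((CARD('d) + 1) * (m*m)) = (real CARD('d) + 1) * real m * real m" by (simp add: algebra_simps)
    finally show ?thesis using ar(2) by (simp add: E_def)
  qed
  define P where "P = PiM {..<n} (\<lambda>_. \<mu>)"
  define P2 where "P2 = PiM {..<2*n} (\<lambda>_. \<mu>)"
  interpret Pn: prob_space P unfolding P_def by (rule prob_space_PiM) (simp add: \<mu>)
  interpret P2: prob_space P2 unfolding P2_def by (rule prob_space_PiM) (simp add: \<mu>)
  obtain D :: "(real \<times> (real^'d)) set" where D: "countable D" "\<And>X. open X \<Longrightarrow> X \<noteq> {} \<Longrightarrow> \<exists>d\<in>D. d \<in> X"
    by (rule countable_dense_setE) blast
  define \<Theta> where "\<Theta> = Pi\<^sub>E ({..<m} \<times> {..<m}) (\<lambda>_. D)"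
  have c\<Theta>: "countable \<Theta>" unfolding \<Theta>_def by (rule countable_PiE) (use D in auto)
  define F where "F = {\<omega> \<in> space P2. \<exists>p\<in>\<Theta>. real n * t < \<bar>\<Sum>i<n. gfun m p (\<omega> i) - gfun m p (\<omega> (i + n))\<bar>}"
  have Fm: "F \<in> sets P2"
    unfolding F_def
  proof (rule sets.sets_Collect_countable_Ex'[OF _ c\<Theta>])
    fix p
    have "(\<lambda>\<omega>. \<bar>\<Sum>i<n. gfun m p (\<omega> i) - gfun m p (\<omega> (i + n))\<bar>) \<in> borel_measurable P2"
      unfolding P2_def by (intro borel_measurable_abs diff_gfun_measurable s\<mu>)
    thus "{\<omega> \<in> space P2. real n * t < \<bar>\<Sum>i<n. gfun m p (\<omega> i) - gfun m p (\<omega> (i + n))\<bar>} \<in> sets P2"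
      by measurable
  qed
  have FB: "emeasure P2 F \<le> ennreal (B * (2 * E))"
    unfolding P2_def B_def E_def
    by (rule F_bound[OF \<mu> ar(1)]) (use nK Fm in \<open>auto simp: P2_def F_def\<close>)
  define G where "G = combine n -` F \<inter> space (P \<Otimes>\<^sub>M P)"
  have Gm: "G \<in> sets (P \<Otimes>\<^sub>M P)"
    unfolding G_def using measurable_sets[OF combine_measurable Fm[unfolded P2_def]] by (simp add: P_def)
  define h where "h = (\<lambda>Z. emeasure P (Pair Z -` G))"
  have hm: "h \<in> borel_measurable P" unfolding h_def by (rule Pn.measurable_emeasure_Pair[OF Gm])
  define A where "A = {Z \<in> space P. 2 * h Z < 1}"
  have Am: "A \<in> sets P" unfolding A_def using hm by measurable
  have GF: "emeasure (P \<Otimes>\<^sub>M P) G = emeasure P2 F"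
  proof -
    have "emeasure P2 F = emeasure (distr (P \<Otimes>\<^sub>M P) P2 (combine n)) F"
      using combine_distr[OF \<mu>, of n] by (simp add: P_def P2_def)
    also have "\<dots> = emeasure (P \<Otimes>\<^sub>M P) G"
      unfolding G_def by (rule emeasure_distr[OF _ Fm]) (simp add: P_def P2_def combine_measurable)
    finally show ?thesis by simp
  qed
  have compl: "emeasure P (space P - A) \<le> ennreal \<delta>"
  proof -
    have "space P - A = {Z \<in> space P. 1 \<le> 2 * h Z}" by (auto simp: A_def not_less)
    also have "emeasure P \<dots> \<le> 2 * (\<integral>\<^sup>+Z. h Z * indicator (space P) Z \<partial>P)"
      using nn_integral_Markov_inequality[where u="\<lambda>Z. h Z" and M=P and A="space P" and c=2] hm by simp
    also have "(\<integral>\<^sup>+Z. h Z * indicator (space P) Z \<partial>P) = (\<integral>\<^sup>+Z. h Z \<partial>P)"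
      by (intro nn_integral_cong) simp
    also have "\<dots> = emeasure (P \<Otimes>\<^sub>M P) G"
      unfolding h_def by (rule Pn.emeasure_pair_measure_alt[OF Gm, symmetric])
    also have "\<dots> \<le> ennreal (B * (2 * E))" using GF FB by simp
    also have "2 * ennreal (B * (2 * E)) = ennreal (4 * B * E)"
    proof -
      have B0: "B \<ge> 0" by (simp add: B_def)
      have "ennreal 2 * ennreal (B * (2 * E)) = ennreal (2 * (B * (2 * E)))"
        using B0 by (intro ennreal_mult[symmetric]) (auto simp: E_def)
      thus ?thesis by (simp add: mult_ac)
    qed
    also have "\<dots> \<le> ennreal \<delta>" using BE by (rule ennreal_leI)
    finally show ?thesis by (simp add: mult_left_mono)
  qed
  have measA: "measure P A \<ge> 1 - \<delta>"
  proof -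
    have "measure P (space P - A) \<le> \<delta>"
      using compl \<delta> by (simp add: Pn.emeasure_eq_measure)
    moreover have "measure P (space P - A) = 1 - measure P A" by (rule Pn.prob_compl[OF Am])
    ultimately show ?thesis by simp
  qed
  have good: "\<bar>Pe_mu \<mu> m x S - Pe_emp n Z m x S\<bar> \<le> \<epsilon>" if ZA: "Z \<in> A" for Z x S
  proof (rule ccontr)
    assume bad: "\<not> ?thesis"
    define p where "p = paramf x S"
    define I where "I = (\<integral>z. gfun m p z \<partial>\<mu>)"
    have Z: "Z \<in> space P" using ZA by (simp add: A_def)
    have PeM: "Pe_mu \<mu> m x S = I"
    proof -
      have "loss m x S = gfun m (paramf x S)" by (rule ext) (rule loss_eq_gfun[OF m2])
      thus ?thesis unfolding Pe_mu_def I_def p_def by simp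
    qed
    have PeE: "Pe_emp n Z m x S = (1 / real n) * (\<Sum>i<n. gfun m p (Z i))"
      unfolding Pe_emp_def p_def by (simp add: loss_eq_gfun[OF m2])
    have devZ: "\<bar>(\<Sum>i<n. gfun m p (Z i)) - real n * I\<bar> > real n * \<epsilon>"
    proof -
      have "\<bar>(\<Sum>i<n. gfun m p (Z i)) - real n * I\<bar> = real n * \<bar>I - (1 / real n) * (\<Sum>i<n. gfun m p (Z i))\<bar>"
      proof -
        have "real n * \<bar>I - (1 / real n) * (\<Sum>i<n. gfun m p (Z i))\<bar> = \<bar>real n * (I - (1 / real n) * (\<Sum>i<n. gfun m p (Z i)))\<bar>"
          using npos by (simp add: abs_mult)
        also have "real n * (I - (1 / real n) * (\<Sum>i<n. gfun m p (Z i))) = real n * I - (\<Sum>i<n. gfun m p (Z i))"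
          using npos by (simp add: field_simps)
        finally show ?thesis by (simp add: abs_minus_commute)
      qed
      moreover have "\<bar>I - (1 / real n) * (\<Sum>i<n. gfun m p (Z i))\<bar> > \<epsilon>" using bad PeM PeE by simp
      ultimately show ?thesis using npos by simp
    qed
    define C where "C = {Z' \<in> space P. \<bar>(\<Sum>i<n. gfun m p (Z' i)) - real n * I\<bar> < sqrt (real n)}"
    define Bd where "Bd = {Z' \<in> space P. \<bar>(\<Sum>i<n. gfun m p (Z' i)) - real n * I\<bar> \<ge> sqrt (real n)}"
    have Bdm: "Bd \<in> sets P"
    proof -
      have "(\<lambda>Z'. \<bar>(\<Sum>i<n. gfun m p (Z' i)) - real n * I\<bar>) \<in> borel_measurable P"
        unfolding P_def using sum_gfun_measurable[OF s\<mu>] by measurable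
      thus ?thesis unfolding Bd_def by measurable
    qed
    have CBd: "C = space P - Bd" by (auto simp: C_def Bd_def)
    have hB: "measure P Bd \<le> 2 * exp (-2)"
      unfolding Bd_def I_def P_def by (rule hoeffding_gfun[OF \<mu> s\<mu> n1])
    have e2: "2 * exp (-2::real) \<le> 1/2"
    proof -
      have "2 \<le> exp (1::real)" using exp_ge_add_one_self[of 1] by simp
      hence "2 * 2 \<le> exp (1::real) * exp 1" by (intro mult_mono) auto
      hence "4 \<le> exp (2::real)" by (simp flip: exp_add)
      thus ?thesis by (simp add: exp_minus field_simps)
    qed
    have measC: "measure P C \<ge> 1/2"
      using hB e2 Pn.prob_compl[OF Bdm] CBd by simp
    have Csub: "C \<subseteq> Pair Z -` G"
    proof
      fix Z' assume Z'C: "Z' \<in> C"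
      have Z': "Z' \<in> space P" using Z'C by (simp add: C_def)
      have dev': "\<bar>(\<Sum>i<n. gfun m p (Z' i)) - real n * I\<bar> < sqrt (real n)" using Z'C by (simp add: C_def)
      obtain p' where p': "p' \<in> \<Theta>" "\<forall>y\<in>Z ` {..<n} \<union> Z' ` {..<n}. gfun m p' y = gfun m p y"
        using gfun_approx[OF D(2), of "Z ` {..<n} \<union> Z' ` {..<n}" m p] by (auto simp: \<Theta>_def)
      have ZZ': "(Z, Z') \<in> space (P \<Otimes>\<^sub>M P)" using Z Z' by (simp add: space_pair_measure)
      have csp: "combine n (Z, Z') \<in> space P2"
        using measurable_space[OF combine_measurable ZZ'[unfolded P_def]] by (simp add: P2_def)
      have c1: "combine n (Z, Z') i = Z i" if "i < n" for i using that by (simp add: combine_def)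
      have c2: "combine n (Z, Z') (i + n) = Z' i" if "i < n" for i using that by (simp add: combine_def)
      have "(\<Sum>i<n. gfun m p' (combine n (Z, Z') i) - gfun m p' (combine n (Z, Z') (i + n)))
            = (\<Sum>i<n. gfun m p (Z i)) - (\<Sum>i<n. gfun m p (Z' i))"
        using p'(2) by (simp add: c1 c2 sum_subtractf)
      moreover have "real n * t = real n * \<epsilon> - sqrt (real n)"
        using npos by (simp add: t_def right_diff_distrib real_div_sqrt)
      moreover have "\<bar>(\<Sum>i<n. gfun m p (Z i)) - (\<Sum>i<n. gfun m p (Z' i))\<bar> > real n * \<epsilon> - sqrt (real n)"
        using devZ dev' by linarith
      ultimately have "real n * t < \<bar>\<Sum>i<n. gfun m p' (combine n (Z, Z') i) - gfun m p' (combine n (Z, Z') (i + n))\<bar>"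
        by simp
      hence "combine n (Z, Z') \<in> F" using csp p'(1) by (auto simp: F_def)
      thus "Z' \<in> Pair Z -` G" using ZZ' by (simp add: G_def)
    qed
    have "ennreal (1/2) \<le> emeasure P C" unfolding Pn.emeasure_eq_measure by (rule ennreal_leI[OF measC])
    also have "\<dots> \<le> h Z" unfolding h_def by (rule emeasure_mono[OF Csub sets_Pair1[OF Gm]])
    finally have "2 * ennreal (1/2) \<le> 2 * h Z" by (rule mult_left_mono) simp
    moreover have "(2::ennreal) * ennreal (1/2) = 1"
    proof -
      have "ennreal 2 * ennreal (1/2) = ennreal (2 * (1/2))" by (rule ennreal_mult[symmetric]) auto
      thus ?thesis by simp
    qed
    ultimately have "1 \<le> 2 * h Z" by simp
    thus False using ZA by (auto simp: A_def not_le[symmetric])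
  qed
  show ?thesis
    using Am measA good unfolding P_def \<epsilon>_def by blast
qed

end
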